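(* Let $K=\mathbb C$, $m=n=2$ (hence $p=2$), let $c\ge1$ and $d\ge 2$ be integers, and let $B=\begin{pmatrix}0&-c\\ d&0\end{pmatrix}$. Then for any pair $\mathbf x=(x_1,x_2)$ of algebraically independent elements of $\mathbb C(X_1,X_2)$, the cluster algebra $\mathcal A(\mathbf x,B)$ is not factorial.
   Context: Let $\mathcal F=\mathbb C(X_1,X_2)$. For $B\in M_{2,2}(\mathbb Z)$ as given and $\mathbf x=(x_1,x_2)$ algebraically independent over $\mathbb C$, $(\mathbf x,B)$ is a seed. For $k\in\{1,2\}$ the mutation $\mu_k(\mathbf x,B)=(\mathbf x',B')$ is given by $b'_{ij}=-b_{ij}$ if $i=k$ or $j=k$, and $b'_{ij}=b_{ij}+\frac{|b_{ik}|b_{kj}+b_{ik}|b_{kj}|}{2}$ otherwise; $x'_s=x_s$ for $s\neq k$ and $x'_k=x_k^{-1}\big(\prod_{b_{ik}>0}x_i^{b_{ik}}+\prod_{b_{ik}<0}x_i^{-b_{ik}}\big)$. The cluster algebra $\mathcal A(\mathbf x,B)$ is the $\mathbb C$-subalgebra of $\mathcal F$ generated by all entries $y_1,y_2$ of all seeds $(\mathbf y,C)$ obtained from $(\mathbf x,B)$ by finite sequences of mutations. *)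

theory Defs
  imports "HOL-Computational_Algebra.Polynomial" "HOL-Computational_Algebra.Fraction_Field"
          "HOL-Algebra.Ring_Divisibility"
begin

text \<open>The field C(X1,X2), realised as the fraction field of C[X1][X2].
  A bivariate polynomial P :: complex poly poly is read as
  P = sum_i (sum_j coeff (Polynomial.coeff P i) j * X1^j) * X2^i.\<close>
type_synonym ratfun2 = "complex poly poly fract"

definition cst :: "complex \<Rightarrow> ratfun2" where
  "cst a = Fract [:[:a:]:] 1"

definition eval2 :: "complex poly poly \<Rightarrow> ratfun2 \<Rightarrow> ratfun2 \<Rightarrow> ratfun2" where
  "eval2 P a b = (\<Sum>i\<le>degree P. (\<Sum>j\<le>degree (Polynomial.coeff P i). cst (Polynomial.coeff (Polynomial.coeff P i) j) * a ^ j) * b ^ i)"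

definition alg_indep2 :: "ratfun2 \<Rightarrow> ratfun2 \<Rightarrow> bool" where
  "alg_indep2 a b \<longleftrightarrow> (\<forall>P. eval2 P a b = 0 \<longrightarrow> P = 0)"

text \<open>Seeds of rank 2: a cluster (indexed by 1,2) and an exchange matrix (indexed by 1,2).\<close>
type_synonym seed = "(nat \<Rightarrow> ratfun2) \<times> (nat \<Rightarrow> nat \<Rightarrow> int)"

definition mut_matrix :: "nat \<Rightarrow> (nat \<Rightarrow> nat \<Rightarrow> int) \<Rightarrow> (nat \<Rightarrow> nat \<Rightarrow> int)" where
  "mut_matrix k B = (\<lambda>i j. if i = k \<or> j = k then - B i j
      else B i j + (\<bar>B i k\<bar> * B k j + B i k * \<bar>B k j\<bar>) div 2)"

definition mut_cluster :: "nat \<Rightarrow> (nat \<Rightarrow> ratfun2) \<Rightarrow> (nat \<Rightarrow> nat \<Rightarrow> int) \<Rightarrow> (nat \<Rightarrow> ratfun2)" where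
  "mut_cluster k x B = x(k := inverse (x k) *
      ((\<Prod>i\<in>{i\<in>{1,2}. B i k > 0}. x i ^ nat (B i k)) +
       (\<Prod>i\<in>{i\<in>{1,2}. B i k < 0}. x i ^ nat (- B i k))))"

definition mutate :: "nat \<Rightarrow> seed \<Rightarrow> seed" where
  "mutate k s = (mut_cluster k (fst s) (snd s), mut_matrix k (snd s))"

inductive_set reachable_seeds :: "seed \<Rightarrow> seed set" for s0 where
  base: "s0 \<in> reachable_seeds s0"
| step: "s \<in> reachable_seeds s0 \<Longrightarrow> k \<in> {1,2} \<Longrightarrow> mutate k s \<in> reachable_seeds s0"

inductive_set cluster_algebra :: "seed \<Rightarrow> ratfun2 set" for s0 where
  const: "cst a \<in> cluster_algebra s0"
| var: "s \<in> reachable_seeds s0 \<Longrightarrow> k \<in> {1,2} \<Longrightarrow> fst s k \<in> cluster_algebra s0"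
| add: "u \<in> cluster_algebra s0 \<Longrightarrow> v \<in> cluster_algebra s0 \<Longrightarrow> u + v \<in> cluster_algebra s0"
| mult: "u \<in> cluster_algebra s0 \<Longrightarrow> v \<in> cluster_algebra s0 \<Longrightarrow> u * v \<in> cluster_algebra s0"

definition subring_struct :: "ratfun2 set \<Rightarrow> ratfun2 ring" where
  "subring_struct A = \<lparr>carrier = A, monoid.mult = (*), one = 1, zero = 0, add = (+)\<rparr>"

end

theory Submission
  imports Defs
begin


lemma cst_add: "cst (a + b) = cst a + cst b"
  by (simp add: cst_def)
lemma cst_mult: "cst (a * b) = cst a * cst b"
  by (simp add: cst_def)
lemma cst_0 [simp]: "cst 0 = 0"
  by (simp add: cst_def Zero_fract_def)
lemma cst_1 [simp]: "cst 1 = 1"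
  by (simp add: cst_def One_fract_def pCons_one)
lemma cst_eq0 [simp]: "cst a = 0 \<longleftrightarrow> a = 0"
  by (simp add: cst_def Zero_fract_def eq_fract)

lemma hom_sum:
  fixes f :: "'a::comm_monoid_add \<Rightarrow> 'b::comm_monoid_add"
  assumes "f 0 = 0" "\<And>x y. f (x+y) = f x + f y"
  shows "f (sum g A) = (\<Sum>x\<in>A. f (g x))"
  by (induction A rule: infinite_finite_induct) (auto simp: assms)

lemma map_poly_mult_hom:
  fixes f :: "'a::comm_ring_1 \<Rightarrow> 'b::comm_ring_1"
  assumes f0: "f 0 = 0" and fadd: "\<And>x y. f (x+y) = f x + f y" and fmult: "\<And>x y. f (x*y) = f x * f y"
  shows "map_poly f (p*q) = map_poly f p * map_poly f q"
  by (simp add: poly_eq_iff coeff_map_poly f0 coeff_mult hom_sum[of f, OF f0 fadd] fmult)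

lemma map_poly_add_hom:
  assumes f0: "f 0 = 0" and fadd: "\<And>x y. f (x+y) = f x + f y"
  shows "map_poly f (p+q) = map_poly f p + map_poly f q"
  by (simp add: poly_eq_iff coeff_map_poly f0 fadd)

lemma poly_sum_bound:
  fixes p :: "'a::comm_semiring_1 poly"
  assumes "degree p \<le> n"
  shows "poly p x = (\<Sum>i\<le>n. Polynomial.coeff p i * x ^ i)"
proof -
  have "poly p x = poly (\<Sum>i\<le>n. Polynomial.monom (Polynomial.coeff p i) i) x"
    using poly_as_sum_of_monoms'[OF assms] by simp
  also have "\<dots> = (\<Sum>i\<le>n. Polynomial.coeff p i * x ^ i)"
    by (simp add: poly_sum Polynomial.poly_monom)
  finally show ?thesis .
qed

definition h1 :: "ratfun2 \<Rightarrow> complex poly \<Rightarrow> ratfun2" where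
  "h1 a p = poly (map_poly cst p) a"

definition E :: "complex poly poly \<Rightarrow> ratfun2 \<Rightarrow> ratfun2 \<Rightarrow> ratfun2" where
  "E P a b = poly (map_poly (h1 a) P) b"

lemma h1_0 [simp]: "h1 a 0 = 0" by (simp add: h1_def)
lemma h1_1 [simp]: "h1 a 1 = 1" by (simp add: h1_def)
lemma h1_add: "h1 a (p + q) = h1 a p + h1 a q"
  by (simp add: h1_def map_poly_add_hom cst_add)
lemma h1_mult: "h1 a (p * q) = h1 a p * h1 a q"
  by (simp add: h1_def map_poly_mult_hom cst_add cst_mult)
lemma h1_const [simp]: "h1 a [:c:] = cst c" by (simp add: h1_def map_poly_pCons)
lemma h1_monom [simp]: "h1 a (Polynomial.monom c n) = cst c * a ^ n"
  by (simp add: h1_def map_poly_monom Polynomial.poly_monom)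
lemma h1_pow: "h1 a (p ^ n) = h1 a p ^ n"
  by (induction n) (simp_all add: h1_mult)

lemma h1_alt: "h1 a p = (\<Sum>j\<le>degree p. cst (Polynomial.coeff p j) * a ^ j)"
  unfolding h1_def
  by (subst poly_sum_bound[OF map_poly_degree_leq]) (simp add: coeff_map_poly)

lemma eval2_E: "eval2 P a b = E P a b"
  unfolding E_def eval2_def
  by (subst poly_sum_bound[OF map_poly_degree_leq]) (simp add: coeff_map_poly h1_alt)

lemma E_0 [simp]: "E 0 a b = 0" by (simp add: E_def)
lemma E_1 [simp]: "E 1 a b = 1" by (simp add: E_def)
lemma E_add: "E (P + Q) a b = E P a b + E Q a b"
  by (simp add: E_def map_poly_add_hom h1_add)
lemma E_mult: "E (P * Q) a b = E P a b * E Q a b"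
  by (simp add: E_def map_poly_mult_hom h1_add h1_mult)
lemma E_pow: "E (P ^ n) a b = E P a b ^ n"
  by (induction n) (simp_all add: E_mult)
lemma E_uminus: "E (- P) a b = - E P a b"
  using E_add[of P "-P" a b] by (simp add: eq_neg_iff_add_eq_0 add.commute)
lemma E_diff: "E (P - Q) a b = E P a b - E Q a b"
  using E_add[of P "-Q" a b] by (simp add: E_uminus)
lemma E_const [simp]: "E [:p:] a b = h1 a p" by (simp add: E_def map_poly_pCons)
lemma E_monom [simp]: "E (Polynomial.monom p n) a b = h1 a p * b ^ n"
  by (simp add: E_def map_poly_monom Polynomial.poly_monom)
lemma E_sum: "E (sum f A) a b = (\<Sum>x\<in>A. E (f x) a b)"
  by (rule hom_sum) (simp_all add: E_add)
lemma E_X [simp]: "E [:[:0,1:]:] a b = a"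
  by (simp add: h1_def map_poly_pCons)
lemma E_Y [simp]: "E [:0,1:] a b = b"
  by (simp add: E_def map_poly_pCons)
lemma E_cst [simp]: "E [:[:c:]:] a b = cst c" by simp



definition ind :: "ratfun2 \<Rightarrow> ratfun2 \<Rightarrow> bool" where
  "ind u v \<longleftrightarrow> (\<forall>P. E P u v = 0 \<longrightarrow> P = 0)"

lemma ind_alg: "alg_indep2 u v \<longleftrightarrow> ind u v"
  by (simp add: alg_indep2_def ind_def eval2_E)

lemma ind_inj: "ind u v \<Longrightarrow> E P u v = E Q u v \<Longrightarrow> P = Q"
  unfolding ind_def using E_diff[of P Q u v] by force

lemma poly_nz_at0: "poly (p::'a::comm_ring_1 poly) 0 \<noteq> 0 \<Longrightarrow> p \<noteq> 0"
  by auto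

lemma ind_nz1: "ind u v \<Longrightarrow> u \<noteq> 0"
  unfolding ind_def by (metis E_X pCons_eq_0_iff one_neq_zero)
lemma ind_nz2: "ind u v \<Longrightarrow> v \<noteq> 0"
  unfolding ind_def by (metis E_Y pCons_eq_0_iff one_neq_zero)

lemma Bq_nz: "(Polynomial.monom 1 q + 1 :: 'a::{comm_ring_1,ring_char_0} poly) \<noteq> 0"
proof (rule poly_nz_at0)
  show "poly (Polynomial.monom 1 q + 1 :: 'a poly) 0 \<noteq> 0"
    by (cases q) (simp_all add: Polynomial.poly_monom)
qed

lemma ind_pow2: "ind u v \<Longrightarrow> v ^ q + 1 \<noteq> 0"
proof
  assume i: "ind u v" and h: "v ^ q + 1 = 0"
  have "E (Polynomial.monom 1 q + 1) u v = 0" using h by (simp add: E_add)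
  then have "(Polynomial.monom 1 q + 1 :: complex poly poly) = 0" using i ind_def by blast
  with Bq_nz[where 'a="complex poly"] show False by blast
qed

lemma ind_pow1: "ind u v \<Longrightarrow> u ^ q + 1 \<noteq> 0"
proof
  assume i: "ind u v" and h: "u ^ q + 1 = 0"
  have "E [:Polynomial.monom 1 q + 1:] u v = 0" using h by (simp add: h1_add)
  then have "[:Polynomial.monom 1 q + 1 :: complex poly:] = 0" using i ind_def by blast
  with Bq_nz[where 'a=complex] show False by simp
qed

definition swP :: "complex poly poly \<Rightarrow> complex poly poly" where
  "swP P = (\<Sum>i\<le>degree P. \<Sum>j\<le>degree (Polynomial.coeff P i).
      Polynomial.monom (Polynomial.monom (Polynomial.coeff (Polynomial.coeff P i) j) i) j)"

lemma E_expand: "E P a b = (\<Sum>i\<le>degree P. (\<Sum>j\<le>degree (Polynomial.coeff P i).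
     cst (Polynomial.coeff (Polynomial.coeff P i) j) * a ^ j) * b ^ i)"
  using eval2_E[of P a b] by (simp add: eval2_def)

lemma E_swP: "E (swP P) a b = E P b a"
  unfolding swP_def E_expand[of P b a]
  by (simp add: E_sum sum_distrib_right sum_distrib_left mult.commute mult.left_commute)

lemma coeff_swP: "Polynomial.coeff (Polynomial.coeff (swP P) j) i = Polynomial.coeff (Polynomial.coeff P i) j"
proof -
  have "Polynomial.coeff (Polynomial.coeff (swP P) j) i =
     (\<Sum>i'\<le>degree P. \<Sum>j'\<le>degree (Polynomial.coeff P i').
        (if j' = j then (if i' = i then Polynomial.coeff (Polynomial.coeff P i') j' else 0) else 0))"
    unfolding swP_def by (simp add: coeff_sum Polynomial.coeff_monom if_distrib[of "\<lambda>p. Polynomial.coeff p i"] cong: if_cong)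
  also have "\<dots> = (\<Sum>i'\<le>degree P. if i' = i then (if j \<le> degree (Polynomial.coeff P i') then Polynomial.coeff (Polynomial.coeff P i') j else 0) else 0)"
    by (rule sum.cong[OF refl]) auto
  also have "\<dots> = Polynomial.coeff (Polynomial.coeff P i) j"
    by (simp add: coeff_eq_0 not_le)
  finally show ?thesis .
qed

lemma swP_0: "swP P = 0 \<Longrightarrow> P = 0"
  by (metis coeff_swP coeff_0 poly_eqI)

lemma ind_swap: "ind u v \<Longrightarrow> ind v u"
  unfolding ind_def by (metis E_swP swP_0)

lemma ind_prop:
  assumes i: "ind v u"
  shows "ind v ((v ^ q + 1) / u)"
  unfolding ind_def
proof (intro allI impI)
  fix P assume h: "E P v ((v ^ q + 1) / u) = 0"
  define w where "w = (v ^ q + 1) / u"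
  define M where "M = degree P"
  define Bq :: "complex poly" where "Bq = Polynomial.monom 1 q + 1"
  define R where "R = (\<Sum>i\<le>M. Polynomial.monom (Polynomial.coeff P i * Bq ^ i) (M - i))"
  have u0: "u \<noteq> 0" using i ind_nz2 by blast
  have hB: "h1 v Bq = w * u" using u0 by (simp add: Bq_def w_def h1_add)
  have "E R v u = (\<Sum>i\<le>M. h1 v (Polynomial.coeff P i) * w ^ i * u ^ M)"
  proof -
    have "E R v u = (\<Sum>i\<le>M. h1 v (Polynomial.coeff P i) * (w*u) ^ i * u ^ (M - i))"
      by (simp add: R_def E_sum h1_mult h1_pow hB)
    also have "\<dots> = (\<Sum>i\<le>M. h1 v (Polynomial.coeff P i) * w ^ i * u ^ M)"
    proof (rule sum.cong[OF refl])
      fix i assume "i \<in> {..M}"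
      then have "u ^ M = u ^ i * u ^ (M - i)" by (simp add: power_add[symmetric])
      then show "h1 v (Polynomial.coeff P i) * (w*u) ^ i * u ^ (M - i) = h1 v (Polynomial.coeff P i) * w ^ i * u ^ M"
        by (simp add: power_mult_distrib)
    qed
    finally show ?thesis .
  qed
  also have "\<dots> = E P v w * u ^ M"
    unfolding E_def M_def
    by (subst poly_sum_bound[OF map_poly_degree_leq]) (simp add: coeff_map_poly sum_distrib_right)
  also have "\<dots> = 0" using h w_def by simp
  finally have "R = 0" using i ind_def by blast
  have "Polynomial.coeff P i = 0" for i
  proof (cases "i \<le> M")
    case True
    have "Polynomial.coeff R (M - i) = (\<Sum>i'\<le>M. if i' = i then Polynomial.coeff P i' * Bq ^ i' else 0)"
      unfolding R_def coeff_sum Polynomial.coeff_monom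
      by (rule sum.cong[OF refl]) (use True in auto)
    also have "\<dots> = Polynomial.coeff P i * Bq ^ i" using True by simp
    finally have "Polynomial.coeff P i * Bq ^ i = 0" using \<open>R = 0\<close> by simp
    moreover have "Bq \<noteq> 0" unfolding Bq_def by (rule Bq_nz)
    ultimately show ?thesis by simp
  next
    case False then show ?thesis by (simp add: M_def coeff_eq_0)
  qed
  then show "P = 0" by (simp add: poly_eqI)
qed

lemma ind_next: "ind u v \<Longrightarrow> ind v ((v ^ q + 1) / u)"
  by (rule ind_prop, rule ind_swap)



abbreviation Xp :: "complex poly poly" where "Xp \<equiv> [:[:0,1:]:]"
abbreviation Yp :: "complex poly poly" where "Yp \<equiv> [:0,1:]"

lemma h1_X [simp]: "h1 a [:0,1:] = a" by (simp add: h1_def map_poly_pCons)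

definition subr :: "ratfun2 set \<Rightarrow> bool" where
  "subr S \<longleftrightarrow> (\<forall>a. cst a \<in> S) \<and> (\<forall>x\<in>S. \<forall>y\<in>S. x + y \<in> S) \<and> (\<forall>x\<in>S. \<forall>y\<in>S. x * y \<in> S)"

lemma subr_cst: "subr S \<Longrightarrow> cst a \<in> S" by (simp add: subr_def)
lemma subr_add: "subr S \<Longrightarrow> x \<in> S \<Longrightarrow> y \<in> S \<Longrightarrow> x + y \<in> S" by (simp add: subr_def)
lemma subr_mult: "subr S \<Longrightarrow> x \<in> S \<Longrightarrow> y \<in> S \<Longrightarrow> x * y \<in> S" by (simp add: subr_def)
lemma subr_0: "subr S \<Longrightarrow> 0 \<in> S" using subr_cst[of S 0] by simp
lemma subr_1: "subr S \<Longrightarrow> 1 \<in> S" using subr_cst[of S 1] by simp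
lemma subr_pow: "subr S \<Longrightarrow> x \<in> S \<Longrightarrow> x ^ n \<in> S"
  by (induction n) (simp_all add: subr_1 subr_mult)
lemma subr_sum: "subr S \<Longrightarrow> (\<And>x. x \<in> A \<Longrightarrow> f x \<in> S) \<Longrightarrow> sum f A \<in> S"
  by (induction A rule: infinite_finite_induct) (simp_all add: subr_0 subr_add)
lemma subr_E: "subr S \<Longrightarrow> u \<in> S \<Longrightarrow> v \<in> S \<Longrightarrow> E P u v \<in> S"
  unfolding E_expand
  by (intro subr_sum subr_mult subr_pow subr_cst) auto

definition Loc :: "ratfun2 \<Rightarrow> ratfun2 \<Rightarrow> complex poly poly \<Rightarrow> ratfun2 set" where
  "Loc u v D = {f. \<exists>P i j k. f * u ^ i * v ^ j * E D u v ^ k = E P u v}"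

definition Lau :: "ratfun2 \<Rightarrow> ratfun2 \<Rightarrow> ratfun2 set" where
  "Lau u v = {f. \<exists>P i j. f * u ^ i * v ^ j = E P u v}"

lemma LocI: "f * u ^ i * v ^ j * E D u v ^ k = E P u v \<Longrightarrow> f \<in> Loc u v D"
  unfolding Loc_def by blast
lemma LauI: "f * u ^ i * v ^ j = E P u v \<Longrightarrow> f \<in> Lau u v"
  unfolding Lau_def by blast

lemma Lau_Loc: "Lau u v = Loc u v 1"
  unfolding Lau_def Loc_def by auto

lemma E_XYD: "E (P * Xp ^ i * Yp ^ j * D ^ k) u v = E P u v * u ^ i * v ^ j * E D u v ^ k"
  by (simp add: E_mult E_pow)

lemma Loc_add: assumes "f \<in> Loc u v D" "g \<in> Loc u v D" shows "f + g \<in> Loc u v D"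
proof -
  obtain P i j k where hf: "f * u ^ i * v ^ j * E D u v ^ k = E P u v" using assms(1) Loc_def by blast
  obtain Q i' j' k' where hg: "g * u ^ i' * v ^ j' * E D u v ^ k' = E Q u v" using assms(2) Loc_def by blast
  let ?e = "E D u v"
  have "(f + g) * u ^ (i+i') * v ^ (j+j') * ?e ^ (k+k') =
     (f * u ^ i * v ^ j * ?e ^ k) * u ^ i' * v ^ j' * ?e ^ k' + (g * u ^ i' * v ^ j' * ?e ^ k') * u ^ i * v ^ j * ?e ^ k"
    by (simp add: power_add algebra_simps)
  also have "\<dots> = E (P * Xp ^ i' * Yp ^ j' * D ^ k' + Q * Xp ^ i * Yp ^ j * D ^ k) u v"
    by (simp only: hf hg E_add E_XYD)
  finally show ?thesis by (rule LocI)
qed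

lemma Loc_mult: assumes "f \<in> Loc u v D" "g \<in> Loc u v D" shows "f * g \<in> Loc u v D"
proof -
  obtain P i j k where hf: "f * u ^ i * v ^ j * E D u v ^ k = E P u v" using assms(1) Loc_def by blast
  obtain Q i' j' k' where hg: "g * u ^ i' * v ^ j' * E D u v ^ k' = E Q u v" using assms(2) Loc_def by blast
  let ?e = "E D u v"
  have "(f * g) * u ^ (i+i') * v ^ (j+j') * ?e ^ (k+k') =
     (f * u ^ i * v ^ j * ?e ^ k) * (g * u ^ i' * v ^ j' * ?e ^ k')"
    by (simp add: power_add algebra_simps)
  also have "\<dots> = E (P * Q) u v"
    by (simp only: hf hg E_mult)
  finally show ?thesis by (rule LocI)
qed

lemma Loc_E: "E P u v \<in> Loc u v D"
  unfolding Loc_def by (rule CollectI, rule exI[of _ P], rule exI[of _ 0], rule exI[of _ 0], rule exI[of _ 0]) simp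

lemma subr_Loc: "subr (Loc u v D)"
  unfolding subr_def using Loc_E[of "[:[:_:]:]" u v D] Loc_add Loc_mult by (auto simp del: E_cst)

lemma subr_Lau: "subr (Lau u v)"
  by (simp add: Lau_Loc subr_Loc)

lemma Lau_E: "E P u v \<in> Lau u v"
  by (simp add: Lau_Loc Loc_E)

lemma Lau_u: "u \<in> Lau u v" using Lau_E[of Xp u v] by simp
lemma Lau_v: "v \<in> Lau u v" using Lau_E[of Yp u v] by simp
lemma Lau_invu: "u \<noteq> 0 \<Longrightarrow> inverse u \<in> Lau u v"
  by (rule LauI[of _ _ 1 _ 0 1]) simp
lemma Lau_invv: "v \<noteq> 0 \<Longrightarrow> inverse v \<in> Lau u v"
  by (rule LauI[of _ _ 0 _ 1 1]) simp

lemma Lau_sub: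
  assumes S: "subr S" and "u \<in> S" "v \<in> S" "inverse u \<in> S" "inverse v \<in> S" "u \<noteq> 0" "v \<noteq> 0"
  shows "Lau u v \<subseteq> S"
proof
  fix f assume "f \<in> Lau u v"
  then obtain P i j where h: "f * u ^ i * v ^ j = E P u v" unfolding Lau_def by blast
  have "f = E P u v * inverse u ^ i * inverse v ^ j"
    using h assms(6,7) by (simp add: field_simps power_inverse)
  also have "\<dots> \<in> S" using assms by (intro subr_mult subr_pow subr_E) auto
  finally show "f \<in> S" .
qed

lemma Lau_swap: "Lau u v = Lau v u"
proof -
  have *: "Lau u v \<subseteq> Lau v u" for u v
  proof
    fix f assume "f \<in> Lau u v"
    then obtain P i j where h: "f * u ^ i * v ^ j = E P u v" unfolding Lau_def by blast
    then have "f * v ^ j * u ^ i = E (swP P) v u" by (simp add: E_swP mult_ac)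
    then show "f \<in> Lau v u" by (rule LauI)
  qed
  show ?thesis using *[of u v] *[of v u] by blast
qed



abbreviation Bp :: "nat \<Rightarrow> complex poly poly" where "Bp q \<equiv> Polynomial.monom 1 q + 1"

definition ev1 :: "complex \<Rightarrow> complex poly poly \<Rightarrow> complex" where
  "ev1 w P = poly (poly P [:w:]) 1"

lemma ev1_add: "ev1 w (P + Q) = ev1 w P + ev1 w Q" by (simp add: ev1_def)
lemma ev1_mult: "ev1 w (P * Q) = ev1 w P * ev1 w Q" by (simp add: ev1_def)
lemma ev1_pow: "ev1 w (P ^ n) = ev1 w P ^ n" by (simp add: ev1_def poly_power)
lemma ev1_1 [simp]: "ev1 w 1 = 1" by (simp add: ev1_def)
lemma ev1_X [simp]: "ev1 w Xp = 1" by (simp add: ev1_def)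
lemma ev1_Y [simp]: "ev1 w Yp = w" by (simp add: ev1_def)
lemma ev1_monom1 [simp]: "ev1 w (Polynomial.monom 1 q) = w ^ q"
  by (simp add: ev1_def Polynomial.poly_monom poly_const_pow)
lemma ev1_sum: "ev1 w (sum f A) = (\<Sum>x\<in>A. ev1 w (f x))"
  by (rule hom_sum) (simp_all add: ev1_add ev1_def)
lemma ev1_nz: "ev1 w P \<noteq> 0 \<Longrightarrow> poly P [:w:] \<noteq> 0"
  by (auto simp: ev1_def)

lemma roots_card: assumes "q \<ge> 1" shows "card ((\<lambda>w. [:w:]) ` {w::complex. w ^ q = -1}) = q"
proof -
  have "inj_on (\<lambda>w::complex. [:w:]) {w. w ^ q = -1}" by (rule inj_onI) simp
  then show ?thesis using card_nth_roots[of "-1" q] assms by (simp add: card_image)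
qed

lemma DIVB:
  fixes P :: "complex poly poly"
  assumes q: "q \<ge> 1" and roots: "\<And>w. w ^ q = -1 \<Longrightarrow> poly P [:w:] = 0"
  shows "Bp q dvd P"
proof -
  have dB: "degree (Bp q) = q" using q
    by (simp add: degree_add_eq_left degree_monom_eq)
  have lB: "lead_coeff (Bp q) = 1" using q dB by simp
  have B0: "Bp q \<noteq> 0" using dB q by auto
  obtain Q R where pd: "pseudo_divmod P (Bp q) = (Q, R)" by (cases "pseudo_divmod P (Bp q)") auto
  from pseudo_divmod(1)[OF B0 pd] lB have eq: "P = Bp q * Q + R" by simp
  from pseudo_divmod(2)[OF B0 pd] dB have dR: "R = 0 \<or> degree R < q" by simp
  have "R = 0"
  proof (rule ccontr)
    assume R0: "R \<noteq> 0"
    have sub: "(\<lambda>w. [:w:]) ` {w::complex. w ^ q = -1} \<subseteq> {x. poly R x = 0}"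
    proof
      fix x assume "x \<in> (\<lambda>w. [:w:]) ` {w::complex. w ^ q = -1}"
      then obtain w where w: "w ^ q = -1" "x = [:w:]" by auto
      have "poly (Bp q) [:w:] = 0" using w by (simp add: Polynomial.poly_monom poly_const_pow flip: pCons_one)
      then have "poly R [:w:] = poly P [:w:]" using eq by simp
      then show "x \<in> {x. poly R x = 0}" using roots w by simp
    qed
    have "q \<le> card {x. poly R x = 0}"
      using card_mono[OF poly_roots_finite[OF R0] sub] roots_card[OF q] by simp
    also have "\<dots> \<le> degree R" by (rule card_poly_roots_bound[OF R0])
    finally show False using dR R0 by simp
  qed
  then show ?thesis using eq by simp
qed

lemma COP:
  fixes P M :: "complex poly poly"
  assumes q: "q \<ge> 1" and M: "\<And>w. w ^ q = -1 \<Longrightarrow> poly M [:w:] \<noteq> 0"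
  shows "Bp q ^ k dvd P * M \<Longrightarrow> Bp q ^ k dvd P"
proof (induction k arbitrary: P)
  case 0 then show ?case by simp
next
  case (Suc k)
  have "Bp q dvd P * M" using Suc.prems by (metis dvd_mult_left power_Suc)
  then obtain T where T: "P * M = Bp q * T" by (auto elim: dvdE)
  have "poly P [:w:] = 0" if w: "w ^ q = -1" for w
  proof -
    have "poly (Bp q) [:w:] = 0" using w by (simp add: Polynomial.poly_monom poly_const_pow flip: pCons_one)
    then have "poly P [:w:] * poly M [:w:] = 0" using T by (metis poly_mult mult_zero_left)
    then show ?thesis using M[OF w] by simp
  qed
  then have "Bp q dvd P" by (rule DIVB[OF q])
  then obtain P' where P': "P = Bp q * P'" by (auto elim: dvdE)
  have B0: "Bp q \<noteq> 0" using Bq_nz by blast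
  have "Bp q * (Bp q ^ k) dvd Bp q * (P' * M)" using Suc.prems P' by (simp add: mult.assoc)
  then have "Bp q ^ k dvd P' * M" using B0 by simp
  then have "Bp q ^ k dvd P'" by (rule Suc.IH)
  then show ?case using P' by simp
qed



definition valid :: "(int \<Rightarrow> nat) \<Rightarrow> (int \<Rightarrow> ratfun2) \<Rightarrow> bool" where
  "valid e s \<longleftrightarrow> (\<forall>n. e n \<ge> 1) \<and> (\<forall>n. e (n+2) = e n) \<and> (\<forall>n. ind (s n) (s (n+1))) \<and>
      (\<forall>n. s (n-1) * s (n+1) = s n ^ e n + 1)"

lemma valid_shift: assumes "valid e s" shows "valid (\<lambda>n. e (n+k)) (\<lambda>n. s (n+k))"
  unfolding valid_def
proof (intro conjI allI)
  fix n
  show "e (n+k) \<ge> 1" using assms valid_def by blast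
  show "e (n + 2 + k) = e (n + k)" using assms unfolding valid_def by (metis add.commute add.left_commute)
  show "ind (s (n+k)) (s (n+1+k))" using assms unfolding valid_def by (metis add.commute add.left_commute)
  have "s (n+k-1) * s (n+k+1) = s (n+k) ^ e (n+k) + 1" using assms unfolding valid_def by blast
  then show "s (n - 1 + k) * s (n + 1 + k) = s (n + k) ^ e (n + k) + 1" by (simp add: algebra_simps)
qed

lemma valid_rev: assumes "valid e s" shows "valid (\<lambda>n. e (k-n)) (\<lambda>n. s (k-n))"
  unfolding valid_def
proof (intro conjI allI)
  fix n
  show "e (k-n) \<ge> 1" using assms valid_def by blast
  have "e (k - n - 2 + 2) = e (k - n - 2)" using assms valid_def by blast
  then show "e (k - (n + 2)) = e (k - n)" by (simp add: algebra_simps)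
  have "ind (s (k-n-1)) (s (k-n-1+1))" using assms valid_def by blast
  then show "ind (s (k-n)) (s (k-(n+1)))" by (simp add: ind_swap algebra_simps)
  have "s (k-n-1) * s (k-n+1) = s (k-n) ^ e (k-n) + 1" using assms unfolding valid_def by blast
  then show "s (k - (n - 1)) * s (k - (n + 1)) = s (k - n) ^ e (k - n) + 1" by (simp add: algebra_simps)
qed

lemma valid_nz: "valid e s \<Longrightarrow> s n \<noteq> 0"
  unfolding valid_def using ind_nz1 by blast

lemma valid_rec: "valid e s \<Longrightarrow> s (n-1) * s (n+1) = s n ^ e n + 1"
  unfolding valid_def by blast

definition N4 :: "nat \<Rightarrow> nat \<Rightarrow> complex poly poly" where "N4 p q = Bp q ^ p + Xp ^ p"
definition S5 :: "nat \<Rightarrow> nat \<Rightarrow> complex poly poly" where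
  "S5 p q = (\<Sum>i<q. (Xp ^ p) ^ (q - Suc i) * N4 p q ^ i)"
definition Q5 :: "nat \<Rightarrow> nat \<Rightarrow> complex poly poly" where
  "Q5 p q = (Xp ^ p) ^ q + Bp q ^ (p - 1) * S5 p q"

lemma Q5_id: assumes "p \<ge> 1"
  shows "N4 p q ^ q + (Xp ^ p) ^ q * Polynomial.monom 1 q = Bp q * Q5 p q"
proof -
  have d: "N4 p q ^ q - (Xp ^ p) ^ q = Bp q ^ p * S5 p q"
    unfolding S5_def power_diff_sumr2 by (simp add: N4_def)
  have "Bp q * Bp q ^ (p - 1) = Bp q ^ p" using assms by (metis Suc_diff_1 less_le_trans power_Suc zero_less_one)
  then have "Bp q * Q5 p q = Bp q * (Xp ^ p) ^ q + Bp q ^ p * S5 p q"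
    unfolding Q5_def by (simp add: algebra_simps)
  then show ?thesis using d by (simp add: algebra_simps)
qed

lemma ev1_vals:
  assumes p: "p \<ge> 1" and w: "w ^ q = -1"
  shows "ev1 w (Bp q) = 0" "ev1 w (N4 p q) = 1" "ev1 w (Q5 p q) \<noteq> 0"
proof -
  show B: "ev1 w (Bp q) = 0" using w by (simp add: ev1_add)
  show N: "ev1 w (N4 p q) = 1" using p B by (simp add: N4_def ev1_add ev1_pow)
  have S: "ev1 w (S5 p q) = of_nat q" using N by (simp add: S5_def ev1_sum ev1_mult ev1_pow)
  show "ev1 w (Q5 p q) \<noteq> 0"
  proof (cases "p = 1")
    case True
    then have "ev1 w (Q5 p q) = 1 + of_nat q" using S by (simp add: Q5_def ev1_add ev1_mult ev1_pow)
    also have "\<dots> \<noteq> 0" by (metis of_nat_Suc of_nat_eq_0_iff nat.distinct(1) add.commute)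
    finally show ?thesis .
  next
    case False
    then have "p - 1 \<noteq> 0" using p by simp
    then have "ev1 w (Q5 p q) = 1" using B by (simp add: Q5_def ev1_add ev1_mult ev1_pow)
    then show ?thesis by simp
  qed
qed



lemma E_Bp [simp]: "E (Bp q) u v = v ^ q + 1" by (simp add: E_add)

lemma base_facts:
  assumes V: "valid e s"
  shows "s 3 * s 1 = E (Bp (e 2)) (s 1) (s 2)"
    and "s 4 * s 1 ^ e 1 * s 2 = E (N4 (e 1) (e 2)) (s 1) (s 2)"
    and "s 5 * s 1 ^ (e 1 * e 2) * s 2 ^ e 2 = E (Xp * Q5 (e 1) (e 2)) (s 1) (s 2)"
proof -
  define X where "X = s 1"
  define Y where "Y = s 2"
  define p where "p = e 1"
  define q where "q = e 2"
  have p1: "p \<ge> 1" using V valid_def p_def by auto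
  have e3: "e 3 = p" using V unfolding valid_def p_def by (metis one_plus_numeral semiring_norm(3))
  have e4: "e 4 = q" using V unfolding valid_def q_def by (metis numeral_Bit0 numeral_One one_add_one)
  have r2: "X * s 3 = Y ^ q + 1" using valid_rec[OF V, of 2] by (simp add: X_def Y_def q_def)
  have r3: "Y * s 4 = s 3 ^ p + 1" using valid_rec[OF V, of 3] e3 by (simp add: Y_def)
  have r4: "s 3 * s 5 = s 4 ^ q + 1" using valid_rec[OF V, of 4] e4 by simp
  have Y0: "Y \<noteq> 0" using valid_nz[OF V] Y_def by simp
  have s30: "s 3 \<noteq> 0" using valid_nz[OF V] by blast
  show h3: "s 3 * s 1 = E (Bp (e 2)) (s 1) (s 2)" using r2 by (simp add: X_def Y_def q_def mult.commute)
  have h4: "s 4 * X ^ p * Y = E (N4 p q) X Y"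
  proof -
    have "s 4 * X ^ p * Y = (Y * s 4) * X ^ p" by (simp add: mult_ac)
    also have "\<dots> = (s 3 * X) ^ p + X ^ p" using r3 by (simp add: algebra_simps power_mult_distrib)
    also have "\<dots> = E (N4 p q) X Y" using r2 by (simp add: N4_def E_add E_pow mult.commute)
    finally show ?thesis .
  qed
  then show "s 4 * s 1 ^ e 1 * s 2 = E (N4 (e 1) (e 2)) (s 1) (s 2)" by (simp add: X_def Y_def p_def q_def)
  have "E (Bp q * Q5 p q) X Y = E (N4 p q) X Y ^ q + (X ^ p) ^ q * Y ^ q"
    unfolding Q5_id[OF p1, symmetric] by (simp add: E_add E_mult E_pow)
  also have "\<dots> = (s 4 ^ q + 1) * (X ^ p) ^ q * Y ^ q"
    unfolding h4[symmetric] by (simp add: algebra_simps power_mult_distrib)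
  also have "\<dots> = s 3 * (s 5 * (X ^ p) ^ q * Y ^ q)" using r4 by (simp add: mult_ac)
  finally have "(s 3 * X) * E (Q5 p q) X Y = s 3 * (s 5 * (X ^ p) ^ q * Y ^ q)"
    using r2 by (simp add: E_mult mult.commute)
  then have "X * E (Q5 p q) X Y = s 5 * (X ^ p) ^ q * Y ^ q" using s30 by (simp add: mult.assoc)
  moreover have "E (Xp * Q5 p q) X Y = X * E (Q5 p q) X Y" by (simp only: E_mult E_X)
  ultimately show "s 5 * s 1 ^ (e 1 * e 2) * s 2 ^ e 2 = E (Xp * Q5 (e 1) (e 2)) (s 1) (s 2)"
    by (simp add: X_def Y_def p_def q_def power_mult)
qed



declare E_Bp[simp del] mult_pCons_left[simp del] mult_pCons_right[simp del]

lemma LP_step: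
  assumes V: "valid e s"
    and I1: "f \<in> Lau (s 2) (s 3)" and I2: "f \<in> Lau (s 4) (s 5)"
  shows "f \<in> Lau (s 1) (s 2)"
proof -
  define X where "X = s 1"
  define Y where "Y = s 2"
  define p where "p = e 1"
  define q where "q = e 2"
  have p1: "p \<ge> 1" and q1: "q \<ge> 1" using V valid_def p_def q_def by auto
  note bf = base_facts[OF V, folded X_def Y_def p_def q_def]
  have nz: "s n \<noteq> 0" for n using valid_nz[OF V] .
  have indXY: "ind X Y" using V unfolding valid_def X_def Y_def by (metis one_add_one)
  define D where "D = N4 p q * Q5 p q"
  have EB: "E (Bp q) X Y = s 3 * X" using bf(1) by simp
  have EB0: "E (Bp q) X Y \<noteq> 0" using EB nz X_def by simp
  have L1: "f \<in> Loc X Y (Bp q)"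
  proof -
    have "Lau (s 2) (s 3) \<subseteq> Loc X Y (Bp q)"
    proof (rule Lau_sub[OF subr_Loc])
      show "s 2 \<in> Loc X Y (Bp q)" using Loc_E[of Yp X Y "Bp q"] Y_def by simp
      show "inverse (s 2) \<in> Loc X Y (Bp q)"
        by (rule LocI[where i=0 and j=1 and k=0 and P=1]) (simp add: Y_def nz)
      show "s 3 \<in> Loc X Y (Bp q)"
        by (rule LocI[where i=1 and j=0 and k=0 and P="Bp q"]) (simp add: EB)
      show "inverse (s 3) \<in> Loc X Y (Bp q)"
        by (rule LocI[where i=0 and j=0 and k=1 and P=Xp]) (simp add: EB nz)
    qed (use nz in auto)
    then show ?thesis using I1 by blast
  qed
  have L2: "f \<in> Loc X Y D"
  proof -
    have ED: "E D X Y = s 4 * X ^ p * Y * E (Q5 p q) X Y" using bf(2) by (simp add: D_def E_mult)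
    have h5: "X * E (Q5 p q) X Y = s 5 * X ^ (p * q) * Y ^ q" using bf(3) by (simp add: E_mult)
    have "Lau (s 4) (s 5) \<subseteq> Loc X Y D"
    proof (rule Lau_sub[OF subr_Loc])
      show "s 4 \<in> Loc X Y D"
        by (rule LocI[where i=p and j=1 and k=0 and P="N4 p q"]) (use bf(2) in simp)
      show "inverse (s 4) \<in> Loc X Y D"
        by (rule LocI[where i=0 and j=0 and k=1 and P="Xp ^ p * Yp * Q5 p q"]) (simp add: ED nz E_mult E_pow)
      show "s 5 \<in> Loc X Y D"
        by (rule LocI[where i="p*q" and j=q and k=0 and P="Xp * Q5 p q"]) (use bf(3) in simp)
      have "inverse (s 5) * X ^ 1 * Y ^ 0 * E D X Y ^ 1 = s 4 * X ^ p * Y * X ^ (p * q) * Y ^ q"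
        using h5 nz by (simp add: ED field_simps)
      also have "\<dots> = E (N4 p q * Xp ^ (p*q) * Polynomial.monom 1 q) X Y"
        using bf(2) by (simp add: E_mult E_pow mult_ac)
      finally show "inverse (s 5) \<in> Loc X Y D" by (rule LocI)
    qed (use nz in auto)
    then show ?thesis using I2 by blast
  qed
  obtain P1 i1 j1 k1 where h1: "f * X ^ i1 * Y ^ j1 * E (Bp q) X Y ^ k1 = E P1 X Y"
    using L1 Loc_def by blast
  obtain P2 i2 j2 k2 where h2: "f * X ^ i2 * Y ^ j2 * E D X Y ^ k2 = E P2 X Y"
    using L2 Loc_def by blast
  define M where "M = Xp ^ i2 * Yp ^ j2 * D ^ k2"
  have "E (P1 * M) X Y = E (P2 * Xp ^ i1 * Yp ^ j1 * Bp q ^ k1) X Y"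
    unfolding M_def E_mult E_pow E_X E_Y h1[symmetric] h2[symmetric] by (simp add: mult_ac)
  then have eqP: "P1 * M = P2 * Xp ^ i1 * Yp ^ j1 * Bp q ^ k1" using ind_inj[OF indXY] by blast
  have "Bp q ^ k1 dvd P1 * M" unfolding eqP by simp
  moreover have "poly M [:w:] \<noteq> 0" if w: "w ^ q = -1" for w
  proof (rule ev1_nz)
    have "w \<noteq> 0" using w q1 by (metis neg_0_equal_iff_equal power_0_left zero_neq_one not_one_le_zero)
    then show "ev1 w M \<noteq> 0" using ev1_vals[OF p1 w]
      by (simp add: M_def D_def ev1_mult ev1_pow)
  qed
  ultimately have "Bp q ^ k1 dvd P1" using COP[OF q1] by blast
  then obtain R where R: "P1 = Bp q ^ k1 * R" by (auto elim: dvdE)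
  have "(f * X ^ i1 * Y ^ j1) * E (Bp q) X Y ^ k1 = E R X Y * E (Bp q) X Y ^ k1"
    using h1 R by (simp add: E_mult E_pow mult_ac)
  then have "f * X ^ i1 * Y ^ j1 = E R X Y" using EB0 by simp
  then show ?thesis unfolding X_def Y_def by (rule LauI)
qed


lemma LP_nat: "valid e s \<Longrightarrow> s (int m + 1) \<in> Lau (s 1) (s 2)"
proof (induction m arbitrary: e s rule: less_induct)
  case (less m)
  note V = less.prems
  consider "m = 0" | "m = 1" | "m = 2" | "m = 3" | "m = 4" | "m \<ge> 5" by linarith
  then show ?case
  proof cases
    case 1 then show ?thesis by (simp add: Lau_u)
  next
    case 2 then show ?thesis by (simp add: Lau_v)
  next
    case 3
    have "s 3 \<in> Lau (s 1) (s 2)"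
      by (rule LauI[where i=1 and j=0 and P="Bp (e 2)"]) (use base_facts(1)[OF V] in simp)
    then show ?thesis using 3 by simp
  next
    case 4
    have "s 4 \<in> Lau (s 1) (s 2)"
      by (rule LauI[where i="e 1" and j=1 and P="N4 (e 1) (e 2)"]) (use base_facts(2)[OF V] in simp)
    then show ?thesis using 4 by simp
  next
    case 5
    have "s 5 \<in> Lau (s 1) (s 2)"
      by (rule LauI[where i="e 1 * e 2" and j="e 2" and P="Xp * Q5 (e 1) (e 2)"]) (use base_facts(3)[OF V] in simp)
    then show ?thesis using 5 by simp
  next
    case 6
    have A: "s (int m + 1) \<in> Lau (s 2) (s 3)"
    proof -
      have "(\<lambda>n. s (n+1)) (int (m-1) + 1) \<in> Lau ((\<lambda>n. s (n+1)) 1) ((\<lambda>n. s (n+1)) 2)"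
        by (rule less.IH[OF _ valid_shift[OF V]]) (use 6 in simp)
      moreover have "int (m-1) + 1 + 1 = int m + 1" using 6 by simp
      ultimately show ?thesis by simp
    qed
    have B: "s (int m + 1) \<in> Lau (s 4) (s 5)"
    proof -
      have "(\<lambda>n. s (n+3)) (int (m-3) + 1) \<in> Lau ((\<lambda>n. s (n+3)) 1) ((\<lambda>n. s (n+3)) 2)"
        by (rule less.IH[OF _ valid_shift[OF V]]) (use 6 in simp)
      moreover have "int (m-3) + 1 + 3 = int m + 1" using 6 by simp
      ultimately show ?thesis by (simp add: add.commute)
    qed
    show ?thesis by (rule LP_step[OF V A B])
  qed
qed

lemma LP: assumes V: "valid e s" shows "s n \<in> Lau (s 1) (s 2)"
proof (cases "n \<ge> 1")
  case True
  then have "n = int (nat (n - 1)) + 1" by simp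
  then show ?thesis using LP_nat[OF V, of "nat (n-1)"] by simp
next
  case False
  have "(\<lambda>n. s (3-n)) (int (nat (2 - n)) + 1) \<in> Lau ((\<lambda>n. s (3-n)) 1) ((\<lambda>n. s (3-n)) 2)"
    by (rule LP_nat[OF valid_rev[OF V]])
  moreover have "3 - (int (nat (2 - n)) + 1) = n" using False by simp
  ultimately show ?thesis by (simp add: Lau_swap[of "s 2"])
qed



fun fw :: "(int \<Rightarrow> nat) \<Rightarrow> ratfun2 \<Rightarrow> ratfun2 \<Rightarrow> nat \<Rightarrow> ratfun2" where
  "fw e u v 0 = u"
| "fw e u v (Suc 0) = v"
| "fw e u v (Suc (Suc k)) = (fw e u v (Suc k) ^ e (int k + 2) + 1) / fw e u v k"

lemma fw_props:
  assumes "ind u v"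
  shows "ind (fw e u v k) (fw e u v (Suc k)) \<and>
         fw e u v k * fw e u v (Suc (Suc k)) = fw e u v (Suc k) ^ e (int k + 2) + 1"
proof (induction k)
  case 0
  have "u \<noteq> 0" using assms ind_nz1 by blast
  then show ?case using assms by simp
next
  case (Suc k)
  have i: "ind (fw e u v (Suc k)) (fw e u v (Suc (Suc k)))"
    using Suc.IH ind_next[of "fw e u v k" "fw e u v (Suc k)" "e (int k + 2)"] by simp
  moreover have "fw e u v (Suc k) \<noteq> 0" using i ind_nz1 by blast
  ultimately show ?case by simp
qed

definition seqz :: "(int \<Rightarrow> nat) \<Rightarrow> ratfun2 \<Rightarrow> ratfun2 \<Rightarrow> int \<Rightarrow> ratfun2" where
  "seqz e u v n = (if n \<ge> 1 then fw e u v (nat (n - 1)) else fw (\<lambda>n. e (3 - n)) v u (nat (2 - n)))"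

lemma seqz_fw: "n \<ge> 1 \<Longrightarrow> seqz e u v n = fw e u v (nat (n - 1))"
  by (simp add: seqz_def)

lemma seqz_bw: "n \<le> 2 \<Longrightarrow> seqz e u v n = fw (\<lambda>n. e (3 - n)) v u (nat (2 - n))"
proof (cases "n \<ge> 1")
  case True
  assume "n \<le> 2"
  with True consider "n = 1" | "n = 2" by linarith
  then show ?thesis by cases (simp_all add: seqz_def)
qed (simp add: seqz_def)

lemma seqz_valid:
  assumes i: "ind u v" and e1: "\<forall>n. e n \<ge> 1" and e2: "\<forall>n. e (n+2) = e n"
  shows "valid e (seqz e u v)"
  unfolding valid_def
proof (intro conjI allI)
  fix n
  show "e n \<ge> 1" using e1 by blast
  show "e (n+2) = e n" using e2 by blast
  define e' where "e' = (\<lambda>n. e (3 - n))"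
  have i': "ind v u" using i ind_swap by blast
  note F = fw_props[OF i, of e] and B = fw_props[OF i', of e']
  show "ind (seqz e u v n) (seqz e u v (n + 1))"
  proof (cases "n \<ge> 1")
    case True
    then have "nat (n + 1 - 1) = Suc (nat (n - 1))" by simp
    then show ?thesis using True F[of "nat (n-1)"] by (simp add: seqz_fw)
  next
    case False
    then have "nat (2 - n) = Suc (nat (2 - (n+1)))" by simp
    then show ?thesis using False B[of "nat (2 - (n+1))"] ind_swap
      by (simp add: seqz_bw e'_def)
  qed
  show "seqz e u v (n - 1) * seqz e u v (n + 1) = seqz e u v n ^ e n + 1"
  proof (cases "n \<ge> 2")
    case True
    define k where "k = nat (n - 2)"
    have "nat (n - 1 - 1) = k" "nat (n - 1) = Suc k" "nat (n + 1 - 1) = Suc (Suc k)" "int k + 2 = n"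
      using True by (simp_all add: k_def)
    then show ?thesis using True F[of k] by (simp add: seqz_fw)
  next
    case False
    define k where "k = nat (1 - n)"
    have "nat (2 - (n + 1)) = k" "nat (2 - n) = Suc k" "nat (2 - (n - 1)) = Suc (Suc k)" "3 - (int k + 2) = n"
      using False by (simp_all add: k_def)
    then show ?thesis using False B[of k] by (simp add: seqz_bw e'_def mult.commute)
  qed
qed

lemma seqz_1: "seqz e u v 1 = u" by (simp add: seqz_def)
lemma seqz_2: "seqz e u v 2 = v" by (simp add: seqz_def)



definition M1 :: "int \<Rightarrow> int \<Rightarrow> nat \<Rightarrow> nat \<Rightarrow> int" where
  "M1 c d = (\<lambda>i j. if i = 1 \<and> j = 2 then - c else if i = 2 \<and> j = 1 then d else 0)"
definition Mn :: "int \<Rightarrow> int \<Rightarrow> nat \<Rightarrow> nat \<Rightarrow> int" where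
  "Mn c d = (\<lambda>i j. - M1 c d i j)"

definition ee :: "int \<Rightarrow> int \<Rightarrow> int \<Rightarrow> nat" where
  "ee c d n = (if even n then nat d else nat c)"

locale CA =
  fixes c d :: int and x1 x2 :: ratfun2
  assumes c1: "c \<ge> 1" and d2: "d \<ge> 2" and indx: "ind x1 x2"
begin

lemma mm1: "k \<in> {1,2} \<Longrightarrow> mut_matrix k (M1 c d) = Mn c d"
  using c1 d2 by (auto simp: mut_matrix_def M1_def Mn_def fun_eq_iff)
lemma mm2: "k \<in> {1,2} \<Longrightarrow> mut_matrix k (Mn c d) = M1 c d"
  using c1 d2 by (auto simp: mut_matrix_def M1_def Mn_def fun_eq_iff)

lemma sets:
  "{i\<in>{1::nat,2}. M1 c d i 1 > 0} = {2}" "{i\<in>{1::nat,2}. M1 c d i 1 < 0} = {}"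
  "{i\<in>{1::nat,2}. M1 c d i 2 > 0} = {}" "{i\<in>{1::nat,2}. M1 c d i 2 < 0} = {1}"
  "{i\<in>{1::nat,2}. Mn c d i 1 > 0} = {}" "{i\<in>{1::nat,2}. Mn c d i 1 < 0} = {2}"
  "{i\<in>{1::nat,2}. Mn c d i 2 > 0} = {1}" "{i\<in>{1::nat,2}. Mn c d i 2 < 0} = {}"
  using c1 d2 by (auto simp: M1_def Mn_def)

abbreviation z where "z \<equiv> seqz (ee c d) x1 x2"

lemma z_valid: "valid (ee c d) z"
  by (rule seqz_valid[OF indx]) (use c1 d2 in \<open>auto simp: ee_def\<close>)

lemma z_nz: "z n \<noteq> 0" using valid_nz[OF z_valid] .

lemma z_up: "z (n+1) = inverse (z (n-1)) * (z n ^ ee c d n + 1)"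
  using valid_rec[OF z_valid, of n] z_nz[of "n-1"] by (simp add: field_simps)
lemma z_down: "z (n-1) = inverse (z (n+1)) * (z n ^ ee c d n + 1)"
  using valid_rec[OF z_valid, of n] z_nz[of "n+1"] by (simp add: field_simps)

lemma reach_inv:
  assumes "s \<in> reachable_seeds ((\<lambda>i. if i = 1 then x1 else x2), M1 c d)"
  shows "\<exists>a. odd a \<and> ((fst s 1 = z a \<and> fst s 2 = z (a+1) \<and> snd s = M1 c d) \<or>
                       (fst s 1 = z a \<and> fst s 2 = z (a-1) \<and> snd s = Mn c d))"
  using assms
proof induction
  case base
  show ?case by (rule exI[of _ 1]) (simp add: seqz_1 seqz_2)
next
  case (step s k)
  obtain a where a: "odd a" and h: "(fst s 1 = z a \<and> fst s 2 = z (a+1) \<and> snd s = M1 c d) \<or>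
                       (fst s 1 = z a \<and> fst s 2 = z (a-1) \<and> snd s = Mn c d)" using step.IH by blast
  have k: "k = 1 \<or> k = 2" using step.hyps(2) by auto
  have ea: "ee c d a = nat c" using a by (simp add: ee_def)
  have ea1: "ee c d (a+1) = nat d" "ee c d (a-1) = nat d" using a by (simp_all add: ee_def)
  from h show ?case
  proof
    assume H: "fst s 1 = z a \<and> fst s 2 = z (a+1) \<and> snd s = M1 c d"
    from k show ?thesis
    proof
      assume k1: "k = 1"
      have "z (a + 1 + 1) = inverse (z (a+1-1)) * (z (a+1) ^ nat d + 1)" using z_up[of "a+1"] ea1 by simp
      then have "fst (mutate k s) 1 = z (a+2) \<and> fst (mutate k s) 2 = z (a+2-1) \<and> snd (mutate k s) = Mn c d"
        using H k1 mm1 c1 d2 by (simp add: mutate_def mut_cluster_def sets M1_def add.commute)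
      moreover have "odd (a+2)" using a by simp
      ultimately show ?thesis by blast
    next
      assume k2: "k = 2"
      have "z (a - 1) = inverse (z (a+1)) * (z a ^ nat c + 1)" using z_down[of a] ea by simp
      then have "fst (mutate k s) 1 = z a \<and> fst (mutate k s) 2 = z (a-1) \<and> snd (mutate k s) = Mn c d"
        using H k2 mm1 c1 d2 by (simp add: mutate_def mut_cluster_def sets M1_def add.commute)
      then show ?thesis using a by blast
    qed
  next
    assume H: "fst s 1 = z a \<and> fst s 2 = z (a-1) \<and> snd s = Mn c d"
    from k show ?thesis
    proof
      assume k1: "k = 1"
      have "z (a - 1 - 1) = inverse (z (a-1+1)) * (z (a-1) ^ nat d + 1)" using z_down[of "a-1"] ea1 by simp
      then have "fst (mutate k s) 1 = z (a-2) \<and> fst (mutate k s) 2 = z (a-2+1) \<and> snd (mutate k s) = M1 c d"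
        using H k1 mm2 c1 d2 by (simp add: mutate_def mut_cluster_def sets Mn_def M1_def add.commute)
      moreover have "odd (a-2)" using a by simp
      ultimately show ?thesis by blast
    next
      assume k2: "k = 2"
      have "z (a + 1) = inverse (z (a-1)) * (z a ^ nat c + 1)" using z_up[of a] ea by simp
      then have "fst (mutate k s) 1 = z a \<and> fst (mutate k s) 2 = z (a+1) \<and> snd (mutate k s) = M1 c d"
        using H k2 mm2 c1 d2 by (simp add: mutate_def mut_cluster_def sets Mn_def M1_def add.commute)
      then show ?thesis using a by blast
    qed
  qed
qed

end



declare mult_pCons_left[simp del] mult_pCons_right[simp del]

definition Hc :: "complex poly \<Rightarrow> complex poly poly" where
  "Hc h = map_poly (\<lambda>c. [:c:]) h"

lemma E_Hc: "E (Hc h) u v = h1 v h"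
proof -
  have "map_poly (h1 u) (map_poly (\<lambda>c. [:c:]) h) = map_poly cst h"
    by (subst map_poly_map_poly) (simp_all add: o_def)
  then show ?thesis by (simp add: E_def Hc_def h1_def)
qed

lemma poly_Hc: "poly (Hc h) [:w:] = [:poly h w:]"
  unfolding Hc_def
proof (induction h)
  case 0 then show ?case by simp
next
  case (pCons a p)
  then show ?case by (simp add: map_poly_pCons algebra_simps mult_pCons_left flip: pCons_one)
qed

lemma ev1_Hc: "ev1 w (Hc h) = poly h w"
  by (simp add: ev1_def poly_Hc)

lemma NOTIN:
  assumes i: "ind u v" and w: "w ^ q = -1" and hw: "poly h w \<noteq> 0"
    and g: "g * (v ^ q + 1) = h1 v h * u ^ a * v ^ b"
  shows "g \<notin> Lau u v"
proof
  assume "g \<in> Lau u v"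
  then obtain P i j where P: "g * u ^ i * v ^ j = E P u v" unfolding Lau_def by blast
  have "E (P * Bp q) u v = E (Hc h * Xp ^ (a+i) * Yp ^ (b+j)) u v"
  proof -
    have "E (P * Bp q) u v = (g * u ^ i * v ^ j) * (v ^ q + 1)" by (simp add: E_mult P E_add)
    also have "\<dots> = (g * (v ^ q + 1)) * u ^ i * v ^ j" by (simp add: mult_ac)
    also have "\<dots> = E (Hc h * Xp ^ (a+i) * Yp ^ (b+j)) u v" unfolding g
      by (simp add: E_mult E_pow E_Hc power_add mult_ac)
    finally show ?thesis .
  qed
  then have "P * Bp q = Hc h * Xp ^ (a+i) * Yp ^ (b+j)" by (rule ind_inj[OF i])
  then have "ev1 w (P * Bp q) = ev1 w (Hc h * Xp ^ (a+i) * Yp ^ (b+j))" by simp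
  moreover have "ev1 w (Bp q) = 0" using w by (simp add: ev1_add)
  moreover have "w \<noteq> 0" using w by (cases q) auto
  ultimately show False using hw by (simp add: ev1_mult ev1_pow ev1_Hc)
qed

lemma root_exists:
  assumes q: "q \<ge> 1" and h: "h \<noteq> 0" "degree h < q"
  shows "\<exists>w::complex. w ^ q = -1 \<and> poly h w \<noteq> 0"
proof (rule ccontr)
  assume "\<not> ?thesis"
  then have "{w::complex. w ^ q = -1} \<subseteq> {x. poly h x = 0}" by auto
  then have "card {w::complex. w ^ q = -1} \<le> card {x. poly h x = 0}"
    by (rule card_mono[OF poly_roots_finite[OF h(1)]])
  also have "\<dots> \<le> degree h" by (rule card_poly_roots_bound[OF h(1)])
  finally show False using card_nth_roots[of "-1" q] q h(2) by simp
qed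

lemma monom_factor:
  fixes p q :: "'a::idom poly"
  assumes pq: "p * q = Polynomial.monom c n" and c: "c \<noteq> 0"
  shows "\<exists>a k. p = Polynomial.monom a k"
proof -
  have nz: "p * q \<noteq> 0" using pq c by simp
  then have p0: "p \<noteq> 0" and q0: "q \<noteq> 0" by auto
  have "Polynomial.order 0 (p * q) = n"
    unfolding pq monom_altdef using c by (simp add: order_smult order_power_n_n[of 0, simplified])
  then have o: "Polynomial.order 0 p + Polynomial.order 0 q = n" using order_mult[OF nz] by simp
  have "degree (p * q) = n" unfolding pq using c by (simp add: degree_monom_eq)
  then have dg: "degree p + degree q = n" using degree_mult_eq[OF p0 q0] by simp
  have "Polynomial.order 0 p \<le> degree p" "Polynomial.order 0 q \<le> degree q"
    using order_degree p0 q0 by auto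
  then have op: "Polynomial.order 0 p = degree p" using o dg by linarith
  have "[:-0, 1:] ^ Polynomial.order 0 p dvd p" by (rule order_1)
  then obtain r where r: "p = [:0, 1:] ^ degree p * r" using op by (auto elim: dvdE)
  have "degree p = degree ([:0, 1:] ^ degree p :: 'a poly) + degree r"
    using p0 r by (metis degree_mult_eq mult_eq_0_iff)
  then have "degree r = 0" by (simp add: degree_power_eq)
  then have "r = [:Polynomial.coeff r 0:]" by (rule degree_0_id[symmetric])
  moreover have "\<And>t c. (t::'a poly) * [:c:] = Polynomial.smult c t"
    by (subst mult.commute) (simp add: mult_pCons_left)
  ultimately have "p = Polynomial.monom (Polynomial.coeff r 0) (degree p)"
    using r by (metis monom_altdef)
  then show ?thesis by blast
qed

lemma MON2:
  fixes P Q :: "complex poly poly"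
  assumes pq: "P * Q = Polynomial.monom (Polynomial.monom 1 m) n"
  shows "\<exists>\<alpha> r s \<beta> r' s'. P = Polynomial.monom (Polynomial.monom \<alpha> r) s \<and> Q = Polynomial.monom (Polynomial.monom \<beta> r') s'"
proof -
  have m0: "Polynomial.monom (1::complex) m \<noteq> 0" by simp
  obtain A s where A: "P = Polynomial.monom A s" using monom_factor[OF pq m0] by blast
  obtain B s' where B: "Q = Polynomial.monom B s'" using monom_factor[of Q P, OF _ m0] pq by (metis mult.commute)
  have "Polynomial.monom (A * B) (s + s') = Polynomial.monom (Polynomial.monom 1 m) n"
    using pq A B by (simp add: mult_monom)
  then have AB: "A * B = Polynomial.monom 1 m" by (simp add: monom_eq_iff')
  obtain \<alpha> r where "A = Polynomial.monom \<alpha> r" using monom_factor[OF AB] by auto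
  moreover obtain \<beta> r' where "B = Polynomial.monom \<beta> r'" using monom_factor[of B A, OF _ one_neq_zero] AB by (metis mult.commute)
  ultimately show ?thesis using A B by blast
qed



declare mult_pCons_left[simp del] mult_pCons_right[simp del]

context CA begin

abbreviation A where "A \<equiv> cluster_algebra ((\<lambda>i. if i = 1 then x1 else x2), M1 c d)"

lemma z1 [simp]: "z 1 = x1" by (simp add: seqz_1)
lemma z2 [simp]: "z 2 = x2" by (simp add: seqz_2)

lemma A_subr: "subr A"
  unfolding subr_def by (auto intro: cluster_algebra.intros)

lemma A_sub: assumes L: "subr L" and zL: "\<And>n. z n \<in> L" shows "A \<subseteq> L"
proof
  fix f assume "f \<in> A"
  then show "f \<in> L"
  proof induction
    case (const a) then show ?case using L subr_cst by blast
  next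
    case (var s k)
    obtain a where "odd a \<and> ((fst s 1 = z a \<and> fst s 2 = z (a+1) \<and> snd s = M1 c d) \<or>
                       (fst s 1 = z a \<and> fst s 2 = z (a-1) \<and> snd s = Mn c d))"
      using reach_inv[OF var.hyps(1)] by blast
    then show ?case using var.hyps(2) zL by auto
  next
    case (add u v) then show ?case using L subr_add by blast
  next
    case (mult u v) then show ?case using L subr_mult by blast
  qed
qed

lemma A_Lau1: "A \<subseteq> Lau x1 x2"
  by (rule A_sub[OF subr_Lau]) (use LP[OF z_valid] in simp)

lemma A_Lau2: "A \<subseteq> Lau (z 3) x2"
proof (rule A_sub[OF subr_Lau])
  fix n
  have "(\<lambda>n. z (4 - n)) (4 - n) \<in> Lau ((\<lambda>n. z (4 - n)) 1) ((\<lambda>n. z (4 - n)) 2)"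
    by (rule LP[OF valid_rev[OF z_valid]])
  then show "z n \<in> Lau (z 3) x2" by simp
qed

lemma A_Lau3: "A \<subseteq> Lau (z 0) x1"
proof (rule A_sub[OF subr_Lau])
  fix n
  have "(\<lambda>n. z (n + -1)) (n + 1) \<in> Lau ((\<lambda>n. z (n + -1)) 1) ((\<lambda>n. z (n + -1)) 2)"
    by (rule LP[OF valid_shift[OF z_valid]])
  then show "z n \<in> Lau (z 0) x1" by simp
qed

lemma ind32: "ind (z 3) x2"
proof -
  have "ind (z 2) (z (2+1))" using z_valid valid_def by blast
  then show ?thesis by (simp add: ind_swap)
qed

lemma ind01: "ind (z 0) x1"
proof -
  have "ind (z 0) (z (0+1))" using z_valid valid_def by blast
  then show ?thesis by simp
qed

lemma rel3: "x1 * z 3 = x2 ^ nat d + 1"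
  using valid_rec[OF z_valid, of 2] by (simp add: ee_def)

lemma rel0: "z 0 * x2 = x1 ^ nat c + 1"
  using valid_rec[OF z_valid, of 1] by (simp add: ee_def)

lemma x1A: "x1 \<in> A"
proof -
  have "fst ((\<lambda>i::nat. if i = 1 then x1 else x2), M1 c d) (1::nat) \<in> A"
    by (rule cluster_algebra.var[OF reachable_seeds.base]) simp
  then show ?thesis by simp
qed
lemma x2A: "x2 \<in> A"
proof -
  have "fst ((\<lambda>i::nat. if i = 1 then x1 else x2), M1 c d) (2::nat) \<in> A"
    by (rule cluster_algebra.var[OF reachable_seeds.base]) simp
  then show ?thesis by simp
qed
lemma z3A: "z 3 \<in> A"
proof -
  have "fst (mutate 1 ((\<lambda>i. if i = 1 then x1 else x2), M1 c d)) 1 \<in> A"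
    by (rule cluster_algebra.var[OF reachable_seeds.step[OF reachable_seeds.base]]) simp_all
  moreover have "fst (mutate 1 ((\<lambda>i. if i = 1 then x1 else x2), M1 c d)) 1 = inverse x1 * (x2 ^ nat d + 1)"
    by (simp only: mutate_def fst_conv snd_conv mut_cluster_def fun_upd_same sets) (simp add: M1_def)
  moreover have "z (2+1) = inverse (z (2-1)) * (z 2 ^ ee c d 2 + 1)" by (rule z_up)
  ultimately show ?thesis by (simp add: ee_def)
qed
lemma z0A: "z 0 \<in> A"
proof -
  have "fst (mutate 2 ((\<lambda>i. if i = 1 then x1 else x2), M1 c d)) 2 \<in> A"
    by (rule cluster_algebra.var[OF reachable_seeds.step[OF reachable_seeds.base]]) simp_all
  moreover have "fst (mutate 2 ((\<lambda>i. if i = 1 then x1 else x2), M1 c d)) 2 = inverse x2 * (1 + x1 ^ nat c)"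
    by (simp only: mutate_def fst_conv snd_conv mut_cluster_def fun_upd_same sets) (simp add: M1_def)
  moreover have "z (1-1) = inverse (z (1+1)) * (z 1 ^ ee c d 1 + 1)" by (rule z_down)
  ultimately show ?thesis by (simp add: ee_def add.commute)
qed

lemma z_nz': "z 3 \<noteq> 0" "z 0 \<noteq> 0" "x1 \<noteq> 0" "x2 \<noteq> 0"
  using z_nz[of 3] z_nz[of 0] z_nz[of 1] z_nz[of 2] by simp_all

end



declare mult_pCons_left[simp del] mult_pCons_right[simp del]

lemma G_carrier: "carrier (mult_of (subring_struct S)) = S - {0}"
  by (simp add: subring_struct_def)
lemma G_mult: "x \<otimes>\<^bsub>mult_of (subring_struct S)\<^esub> y = x * y"
  by (simp add: mult_of_def subring_struct_def)
lemma G_one: "\<one>\<^bsub>mult_of (subring_struct S)\<^esub> = 1"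
  by (simp add: mult_of_def subring_struct_def)

context CA begin

lemma roots_ex: "\<exists>w::complex. w ^ nat d = -1" "\<exists>w::complex. w ^ nat c = -1"
  using root_exists[of "nat d" 1] root_exists[of "nat c" 1] c1 d2 by auto

lemma MONO:
  assumes gA: "g \<in> A" and al: "\<alpha> \<noteq> 0" and eq: "g * x1 ^ i * x2 ^ j = cst \<alpha> * x1 ^ r * x2 ^ s"
  shows "i \<le> r \<and> j \<le> s"
proof
  show "i \<le> r"
  proof (rule ccontr)
    assume "\<not> i \<le> r"
    then have ri: "r < i" by simp
    define g' where "g' = g * x1 ^ (i - r - 1) * x2 ^ j"
    have g'A: "g' \<in> A" unfolding g'_def
      by (intro subr_mult[OF A_subr] subr_pow[OF A_subr] gA x1A x2A)
    have pw: "x1 ^ i = x1 ^ (i - r) * x1 ^ r" using ri by (simp flip: power_add)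
    have "(g * x1 ^ (i - r) * x2 ^ j) * x1 ^ r = g * x1 ^ i * x2 ^ j" by (simp only: pw mult_ac)
    also have "\<dots> = (cst \<alpha> * x2 ^ s) * x1 ^ r" using eq by (simp add: mult_ac)
    finally have "(g * x1 ^ (i - r) * x2 ^ j) * x1 ^ r = (cst \<alpha> * x2 ^ s) * x1 ^ r" .
    then have e1: "g * x1 ^ (i - r) * x2 ^ j = cst \<alpha> * x2 ^ s" using z_nz' by simp
    have "g' * (x2 ^ nat d + 1) = g' * x1 * z 3" using rel3 by (simp add: mult.assoc)
    also have "\<dots> = (g * x1 ^ (i - r) * x2 ^ j) * z 3"
    proof -
      have "i - r = Suc (i - r - 1)" using ri by simp
      then have "x1 ^ (i - r) = x1 ^ (i - r - 1) * x1" using power_Suc2[of x1 "i-r-1"] by simp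
      then show ?thesis unfolding g'_def by (simp only: mult_ac)
    qed
    also have "\<dots> = h1 x2 (Polynomial.monom \<alpha> s) * z 3 ^ 1 * x2 ^ 0" using e1 by simp
    finally have h: "g' * (x2 ^ nat d + 1) = h1 x2 (Polynomial.monom \<alpha> s) * z 3 ^ 1 * x2 ^ 0" .
    obtain w :: complex where w: "w ^ nat d = -1" using roots_ex by blast
    have "w \<noteq> 0" using w by (cases "nat d") auto
    then have "poly (Polynomial.monom \<alpha> s) w \<noteq> 0" using al by (simp add: Polynomial.poly_monom)
    from NOTIN[OF ind32 w this h] g'A A_Lau2 show False by blast
  qed
  show "j \<le> s"
  proof (rule ccontr)
    assume "\<not> j \<le> s"
    then have sj: "s < j" by simp
    define g' where "g' = g * x1 ^ i * x2 ^ (j - s - 1)"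
    have g'A: "g' \<in> A" unfolding g'_def
      by (intro subr_mult[OF A_subr] subr_pow[OF A_subr] gA x1A x2A)
    have pw: "x2 ^ j = x2 ^ (j - s) * x2 ^ s" using sj by (simp flip: power_add)
    have "(g * x1 ^ i * x2 ^ (j - s)) * x2 ^ s = g * x1 ^ i * x2 ^ j" by (simp only: pw mult_ac)
    also have "\<dots> = (cst \<alpha> * x1 ^ r) * x2 ^ s" using eq by (simp add: mult_ac)
    finally have "(g * x1 ^ i * x2 ^ (j - s)) * x2 ^ s = (cst \<alpha> * x1 ^ r) * x2 ^ s" .
    then have e1: "g * x1 ^ i * x2 ^ (j - s) = cst \<alpha> * x1 ^ r" using z_nz' by simp
    have "g' * (x1 ^ nat c + 1) = g' * x2 * z 0" using rel0 by (simp add: mult_ac)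
    also have "\<dots> = (g * x1 ^ i * x2 ^ (j - s)) * z 0"
    proof -
      have "j - s = Suc (j - s - 1)" using sj by simp
      then have "x2 ^ (j - s) = x2 ^ (j - s - 1) * x2" using power_Suc2[of x2 "j-s-1"] by simp
      then show ?thesis unfolding g'_def by (simp only: mult_ac)
    qed
    also have "\<dots> = h1 x1 (Polynomial.monom \<alpha> r) * z 0 ^ 1 * x1 ^ 0" using e1 by simp
    finally have h: "g' * (x1 ^ nat c + 1) = h1 x1 (Polynomial.monom \<alpha> r) * z 0 ^ 1 * x1 ^ 0" .
    obtain w :: complex where w: "w ^ nat c = -1" using roots_ex by blast
    have "w \<noteq> 0" using w by (cases "nat c") auto
    then have "poly (Polynomial.monom \<alpha> r) w \<noteq> 0" using al by (simp add: Polynomial.poly_monom)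
    from NOTIN[OF ind01 w this h] g'A A_Lau3 show False by blast
  qed
qed

lemma IRR:
  assumes aA: "a \<in> A" and bA: "b \<in> A" and ab: "a * b = x1"
  shows "(\<exists>la. la \<noteq> 0 \<and> a = cst la) \<or> (\<exists>la. la \<noteq> 0 \<and> b = cst la)"
proof -
  obtain P i j where P: "a * x1 ^ i * x2 ^ j = E P x1 x2" using aA A_Lau1 Lau_def by blast
  obtain Q k l where Q: "b * x1 ^ k * x2 ^ l = E Q x1 x2" using bA A_Lau1 Lau_def by blast
  have "E (P * Q) x1 x2 = E (Polynomial.monom (Polynomial.monom 1 (i+k+1)) (j+l)) x1 x2"
  proof -
    have "E (P * Q) x1 x2 = (a * b) * x1 ^ (i + k) * x2 ^ (j + l)"
      unfolding E_mult P[symmetric] Q[symmetric] by (simp add: power_add mult_ac)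
    then show ?thesis using ab by (simp add: power_add mult_ac)
  qed
  then have PQ: "P * Q = Polynomial.monom (Polynomial.monom 1 (i+k+1)) (j+l)" by (rule ind_inj[OF indx])
  obtain \<alpha> r s \<beta> r' s' where PP: "P = Polynomial.monom (Polynomial.monom \<alpha> r) s"
    and QQ: "Q = Polynomial.monom (Polynomial.monom \<beta> r') s'" using MON2[OF PQ] by blast
  have "Polynomial.monom (Polynomial.monom (\<alpha> * \<beta>) (r + r')) (s + s') = Polynomial.monom (Polynomial.monom 1 (i+k+1)) (j+l)"
    using PQ PP QQ by (simp add: mult_monom)
  then have ab1: "\<alpha> * \<beta> = 1" and rr: "r + r' = i + k + 1" and ss: "s + s' = j + l"
    by (auto simp: monom_eq_iff')
  have a0: "\<alpha> \<noteq> 0" and b0: "\<beta> \<noteq> 0" using ab1 by auto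
  have Pa: "a * x1 ^ i * x2 ^ j = cst \<alpha> * x1 ^ r * x2 ^ s" using P PP by simp
  have Qb: "b * x1 ^ k * x2 ^ l = cst \<beta> * x1 ^ r' * x2 ^ s'" using Q QQ by simp
  from MONO[OF aA a0 Pa] MONO[OF bA b0 Qb] have "i \<le> r" "j \<le> s" "k \<le> r'" "l \<le> s'" by auto
  with rr ss have "s = j" "r = i \<or> r' = k" by auto
  then show ?thesis
  proof (elim conjE disjE)
    assume "s = j" "r = i"
    then have "a * (x1 ^ i * x2 ^ j) = cst \<alpha> * (x1 ^ i * x2 ^ j)" using Pa by (simp add: mult_ac)
    then have "a = cst \<alpha>" using z_nz' by simp
    then show ?thesis using a0 by blast
  next
    assume "s = j" "r' = k"
    then have "s' = l" using ss by simp
    then have "b * (x1 ^ k * x2 ^ l) = cst \<beta> * (x1 ^ k * x2 ^ l)" using Qb \<open>r' = k\<close> by (simp add: mult_ac)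
    then have "b = cst \<beta>" using z_nz' by simp
    then show ?thesis using b0 by blast
  qed
qed

lemma h1_A: "h1 x2 p \<in> A"
  using subr_E[OF A_subr x1A x2A, of "Hc p"] by (simp add: E_Hc)

lemma NDIV:
  assumes h0: "h \<noteq> 0" and hd: "degree h < nat d"
  shows "\<not> x1 divides\<^bsub>mult_of (subring_struct A)\<^esub> h1 x2 h"
proof
  assume "x1 divides\<^bsub>mult_of (subring_struct A)\<^esub> h1 x2 h"
  then obtain w where wA: "w \<in> A" and hw: "h1 x2 h = x1 * w"
    unfolding factor_def G_carrier G_mult by blast
  have "w * (x2 ^ nat d + 1) = h1 x2 h * z 3 ^ 1 * x2 ^ 0"
    using rel3 hw by (simp add: mult_ac flip: rel3)
  moreover have "nat d \<ge> 1" using d2 by simp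
  then obtain r where "r ^ nat d = -1" "poly h r \<noteq> 0"
    using root_exists[OF _ h0 hd] by blast
  ultimately have "w \<notin> Lau (z 3) x2" using NOTIN[OF ind32] by blast
  then show False using wA A_Lau2 by blast
qed

lemma not_factorial: "\<not> factorial_domain (subring_struct A)"
proof
  assume FD: "factorial_domain (subring_struct A)"
  define G where "G = mult_of (subring_struct A)"
  have FM: "factorial_monoid G" using FD unfolding factorial_domain_def G_def by blast
  have carr: "carrier G = A - {0}" unfolding G_def by (rule G_carrier)
  have mul: "\<And>x y. x \<otimes>\<^bsub>G\<^esub> y = x * y" unfolding G_def by (rule G_mult)
  have one: "\<one>\<^bsub>G\<^esub> = 1" unfolding G_def by (rule G_one)
  have x1c: "x1 \<in> carrier G" using carr x1A z_nz' by simp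
  have cstU: "cst la \<in> Units G" if "la \<noteq> 0" for la
  proof -
    have "cst (inverse la) \<in> carrier G" "cst la \<in> carrier G"
      using that carr cluster_algebra.const by auto
    moreover have "cst (inverse la) * cst la = 1" "cst la * cst (inverse la) = 1"
      using that by (simp_all flip: cst_mult)
    ultimately show ?thesis unfolding Units_def mul one by blast
  qed
  have nu: "x1 \<notin> Units G"
  proof
    assume "x1 \<in> Units G"
    then obtain y where yA: "y \<in> A" and y: "y * x1 = 1" unfolding Units_def carr mul one by blast
    have "y * x1 ^ 1 * x2 ^ 0 = cst 1 * x1 ^ 0 * x2 ^ 0" using y by simp
    from MONO[OF yA _ this] show False by simp
  qed
  have irr: "Divisibility.irreducible G x1"
    unfolding Divisibility.irreducible_def
  proof (intro conjI ballI impI nu)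
    fix b assume bc: "b \<in> carrier G" and pf: "properfactor G b x1"
    have bd: "b divides\<^bsub>G\<^esub> x1" and nd: "\<not> x1 divides\<^bsub>G\<^esub> b"
      using pf unfolding properfactor_def by auto
    from bd obtain e where ec: "e \<in> carrier G" and be': "x1 = b \<otimes>\<^bsub>G\<^esub> e"
      unfolding factor_def by blast
    have be: "x1 = b * e" using be' by (simp only: mul)
    from IRR[of b e] bc ec be carr
    consider (a) la where "la \<noteq> 0" "b = cst la" | (b) la where "la \<noteq> 0" "e = cst la" by auto
    then show "b \<in> Units G"
    proof cases
      case a then show ?thesis using cstU by simp
    next
      case b
      have ci: "cst la * cst (inverse la) = 1" using b(1) by (simp flip: cst_mult)
      have "b = x1 * cst (inverse la)" using be b(2) ci by (simp add: mult.assoc)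
      moreover have "cst (inverse la) \<in> carrier G" using b carr cluster_algebra.const by auto
      ultimately have "x1 divides\<^bsub>G\<^esub> b" unfolding factor_def mul by blast
      with nd show ?thesis by blast
    qed
  qed
  have pr: "Divisibility.prime G x1" by (rule factorial_monoid.irreducible_prime[OF FM irr x1c])
  obtain \<zeta> :: complex where \<zeta>: "\<zeta> ^ nat d = -1" using roots_ex by blast
  define hq :: "complex poly" where "hq = Polynomial.monom 1 (nat d) + 1"
  have "poly hq \<zeta> = 0" using \<zeta> by (simp add: hq_def Polynomial.poly_monom)
  then obtain g where hg: "hq = [:-\<zeta>, 1:] * g" by (auto simp: poly_eq_0_iff_dvd elim: dvdE)
  have hq0: "hq \<noteq> 0" unfolding hq_def by (rule Bq_nz)
  have dhq: "degree hq = nat d" using d2 unfolding hq_def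
    by (simp add: degree_add_eq_left degree_monom_eq)
  have g0: "g \<noteq> 0" using hq0 hg by auto
  have dg: "degree g < nat d" using dhq hg g0 by (simp add: degree_mult_eq)
  have uv: "h1 x2 [:-\<zeta>, 1:] * h1 x2 g = x1 * z 3"
    using rel3 by (simp flip: h1_mult hg add: hq_def h1_add)
  have uvc: "h1 x2 [:-\<zeta>, 1:] \<in> carrier G" "h1 x2 g \<in> carrier G" "z 3 \<in> carrier G"
    using uv z_nz' carr h1_A z3A by auto
  have "x1 divides\<^bsub>G\<^esub> (h1 x2 [:-\<zeta>, 1:] \<otimes>\<^bsub>G\<^esub> h1 x2 g)"
    unfolding factor_def mul uv using uvc(3) by blast
  then have "x1 divides\<^bsub>G\<^esub> h1 x2 [:-\<zeta>, 1:] \<or> x1 divides\<^bsub>G\<^esub> h1 x2 g"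
    using pr uvc(1,2) unfolding Divisibility.prime_def by blast
  moreover have "\<not> x1 divides\<^bsub>G\<^esub> h1 x2 [:-\<zeta>, 1:]"
    unfolding G_def by (rule NDIV) (use d2 in auto)
  moreover have "\<not> x1 divides\<^bsub>G\<^esub> h1 x2 g"
    unfolding G_def by (rule NDIV[OF g0 dg])
  ultimately show False by blast
qed

end



theorem corollary6p4:
  fixes c d :: int and x1 x2 :: ratfun2
  assumes "c \<ge> 1" and "d \<ge> 2"
    and "alg_indep2 x1 x2"
  shows "\<not> factorial_domain (subring_struct
           (cluster_algebra ((\<lambda>i. if i = 1 then x1 else x2),
              (\<lambda>i j. if i = 1 \<and> j = 2 then - c else if i = 2 \<and> j = 1 then d else 0))))"
proof -
  interpret CA c d x1 x2
    by unfold_locales (use assms in \<open>auto simp: ind_alg\<close>)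
  show ?thesis using not_factorial unfolding M1_def .
qed

end
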